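(* For each natural number $n\ge2$, $[S_n\ltimes\mathbb{T}^n,S_n\ltimes\mathbb{T}^n]=[S_n,S_n]\ltimes\mathbb{T}^n_1$, where $\mathbb{T}^n_1=\{t_{(\lambda_1,\dots,\lambda_n)}\in\mathbb{T}^n\mid\prod_{i=1}^n\lambda_i=1\}$.
   Context: $K$ is a field of characteristic zero. $\mathbb{T}^n=\{t_\lambda\mid\lambda=(\lambda_1,\dots,\lambda_n)\in(K^* )^n\}$ is the torus of automorphisms $t_\lambda:x_i\mapsto\lambda_ix_i,\ y_i\mapsto\lambda_i^{-1}y_i$ of the algebra $\mathbb{S}_n$ (generated by $x_i,y_i$ with $y_ix_i=1$ and $x_i,y_i$ commuting with $x_j,y_j$ for $i\ne j$), and $S_n$ is the symmetric group acting by automorphisms $x_i\mapsto x_{\sigma(i)},y_i\mapsto y_{\sigma(i)}$; in the group $S_n\ltimes\mathbb{T}^n$ they generate, $S_n$ acts on $\mathbb{T}^n$ by permuting the coordinates of $\lambda$. *)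

theory Defs
  imports "HOL-Algebra.Sym_Groups" "HOL-Algebra.Solvable_Groups"
begin

text \<open>Torus T^n: tuples lambda = (lambda_1,...,lambda_n) in (K^*)^n, represented as functions
  nat => K, nonzero on {1..n} and normalised to 1 outside {1..n}.\<close>
definition torus :: "nat \<Rightarrow> (nat \<Rightarrow> 'k::field) set" where
  "torus n = {l. (\<forall>i\<in>{1..n}. l i \<noteq> 0) \<and> (\<forall>i. i \<notin> {1..n} \<longrightarrow> l i = 1)}"

definition torus1 :: "nat \<Rightarrow> (nat \<Rightarrow> 'k::field) set" where
  "torus1 n = {l \<in> torus n. (\<Prod>i\<in>{1..n}. l i) = 1}"

text \<open>The pair (sigma, lambda) stands for the automorphism sigma \<circ> t_lambda
  of the algebra; since sigma t_lambda sigma^-1 = t_(lambda \<circ> sigma^-1) one gets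
  (sigma t_lambda)(tau t_mu) = (sigma tau) t_(lambda\<circ>tau * mu).\<close>
definition SnT :: "nat \<Rightarrow> ((nat \<Rightarrow> nat) \<times> (nat \<Rightarrow> 'k::field)) monoid" where
  "SnT n = \<lparr> carrier = {(s, l). s permutes {1..n} \<and> l \<in> torus n},
            mult = (\<lambda>(s, l) (t, m). (s \<circ> t, \<lambda>i. l (t i) * m i)),
            one = (id, \<lambda>_. 1) \<rparr>"

end

theory Submission
  imports Defs
begin

lemma torus_nz: "l \<in> torus n \<Longrightarrow> l i \<noteq> 0"
  unfolding torus_def by (cases "i \<in> {1..n}") auto

lemma SnT_carrier: "x \<in> carrier (SnT n) \<longleftrightarrow> fst x permutes {1..n} \<and> snd x \<in> torus n"
  unfolding SnT_def by (cases x) auto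

lemma SnT_mult: "(s, l) \<otimes>\<^bsub>SnT n\<^esub> (t, m) = (s \<circ> t, \<lambda>i. l (t i) * m i)"
  unfolding SnT_def by simp

lemma SnT_one: "\<one>\<^bsub>SnT n\<^esub> = (id, \<lambda>_. 1)"
  unfolding SnT_def by simp

lemma torus_mult: assumes "t permutes {1..n}" "l \<in> torus n" "m \<in> torus n"
  shows "(\<lambda>i. l (t i) * m i) \<in> torus n"
  using assms unfolding torus_def
  by (auto simp: permutes_not_in permutes_in_image)

lemma SnT_group: "group (SnT n :: ((nat \<Rightarrow> nat) \<times> (nat \<Rightarrow> 'k::field)) monoid)"
proof (rule groupI)
  fix x y :: "(nat \<Rightarrow> nat) \<times> (nat \<Rightarrow> 'k)" assume "x \<in> carrier (SnT n)" "y \<in> carrier (SnT n)"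
  then show "x \<otimes>\<^bsub>SnT n\<^esub> y \<in> carrier (SnT n)"
    by (cases x, cases y) (auto simp: SnT_carrier SnT_mult permutes_compose torus_mult)
next
  show "\<one>\<^bsub>SnT n\<^esub> \<in> carrier (SnT n)"
    by (auto simp: SnT_carrier SnT_one torus_def)
next
  fix x y z :: "(nat \<Rightarrow> nat) \<times> (nat \<Rightarrow> 'k)" assume "x \<in> carrier (SnT n)" "y \<in> carrier (SnT n)" "z \<in> carrier (SnT n)"
  then show "x \<otimes>\<^bsub>SnT n\<^esub> y \<otimes>\<^bsub>SnT n\<^esub> z = x \<otimes>\<^bsub>SnT n\<^esub> (y \<otimes>\<^bsub>SnT n\<^esub> z)"
    by (cases x, cases y, cases z) (auto simp: SnT_mult o_assoc mult.assoc)
next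
  fix x :: "(nat \<Rightarrow> nat) \<times> (nat \<Rightarrow> 'k)" assume "x \<in> carrier (SnT n)"
  then show "\<one>\<^bsub>SnT n\<^esub> \<otimes>\<^bsub>SnT n\<^esub> x = x"
    by (cases x) (auto simp: SnT_mult SnT_one)
next
  fix x :: "(nat \<Rightarrow> nat) \<times> (nat \<Rightarrow> 'k)" assume x: "x \<in> carrier (SnT n)"
  obtain s l where sl: "x = (s, l)" by (cases x)
  with x have s: "s permutes {1..n}" and l: "l \<in> torus n" by (auto simp: SnT_carrier)
  let ?y = "(inv_into UNIV s, \<lambda>j. inverse (l (inv_into UNIV s j)))"
  have "?y \<in> carrier (SnT n)"
    using s l unfolding SnT_carrier torus_def
    by (auto simp: permutes_inv permutes_not_in[OF permutes_inv[OF s]] permutes_in_image[OF permutes_inv[OF s]])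
  moreover have "?y \<otimes>\<^bsub>SnT n\<^esub> x = \<one>\<^bsub>SnT n\<^esub>"
    using s l by (auto simp: sl SnT_mult SnT_one permutes_inv_o permutes_inverses torus_nz)
  ultimately show "\<exists>y\<in>carrier (SnT n). y \<otimes>\<^bsub>SnT n\<^esub> x = \<one>\<^bsub>SnT n\<^esub>" by blast
qed

lemma fst_hom: "group_hom (SnT n :: ((nat \<Rightarrow> nat) \<times> (nat \<Rightarrow> 'k::field)) monoid) (sym_group n) fst"
proof (intro group_hom.intro group_hom_axioms.intro SnT_group sym_group_is_group homI)
  fix x :: "(nat \<Rightarrow> nat) \<times> (nat \<Rightarrow> 'k)"
  assume "x \<in> carrier (SnT n)" then show "fst x \<in> carrier (sym_group n)"
    by (simp add: SnT_carrier sym_group_carrier)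
next
  fix x y :: "(nat \<Rightarrow> nat) \<times> (nat \<Rightarrow> 'k)"
  show "fst (x \<otimes>\<^bsub>SnT n\<^esub> y) = fst x \<otimes>\<^bsub>sym_group n\<^esub> fst y"
    by (cases x, cases y) (simp add: SnT_mult sym_group_mult)
qed

lemma iota_hom: "group_hom (sym_group n) (SnT n :: ((nat \<Rightarrow> nat) \<times> (nat \<Rightarrow> 'k::field)) monoid) (\<lambda>s. (s, \<lambda>_. 1))"
proof (intro group_hom.intro group_hom_axioms.intro SnT_group sym_group_is_group homI)
  fix x assume "x \<in> carrier (sym_group n)" then show "(x, \<lambda>_. 1::'k) \<in> carrier (SnT n)"
    by (simp add: SnT_carrier sym_group_carrier torus_def)
next
  fix x y
  show "(x \<otimes>\<^bsub>sym_group n\<^esub> y, \<lambda>_. 1::'k) = (x, \<lambda>_. 1) \<otimes>\<^bsub>SnT n\<^esub> (y, \<lambda>_. 1)"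
    by (simp add: SnT_mult sym_group_mult)
qed

definition Kmul :: "'k::field monoid" where
  "Kmul = \<lparr>carrier = {x. x \<noteq> 0}, mult = (*), one = 1\<rparr>"

lemma Kmul_comm: "comm_group (Kmul :: 'k::field monoid)"
proof (rule comm_groupI)
  fix x :: 'k assume "x \<in> carrier Kmul"
  then have "inverse x \<in> carrier Kmul \<and> inverse x \<otimes>\<^bsub>Kmul\<^esub> x = \<one>\<^bsub>Kmul\<^esub>"
    by (simp add: Kmul_def)
  then show "\<exists>y\<in>carrier Kmul. y \<otimes>\<^bsub>Kmul\<^esub> x = \<one>\<^bsub>Kmul\<^esub>" by blast
qed (auto simp: Kmul_def mult.assoc mult.commute)

lemma phi_hom: "group_hom (SnT n :: ((nat \<Rightarrow> nat) \<times> (nat \<Rightarrow> 'k::field)) monoid) Kmul (\<lambda>x. \<Prod>i\<in>{1..n}. snd x i)"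
proof (intro group_hom.intro group_hom_axioms.intro SnT_group comm_group.axioms(2)[OF Kmul_comm] homI)
  fix x :: "(nat \<Rightarrow> nat) \<times> (nat \<Rightarrow> 'k)"
  assume "x \<in> carrier (SnT n)" then show "(\<Prod>i\<in>{1..n}. snd x i) \<in> carrier Kmul"
    by (auto simp: SnT_carrier Kmul_def torus_nz)
next
  fix x y :: "(nat \<Rightarrow> nat) \<times> (nat \<Rightarrow> 'k)"
  assume x: "x \<in> carrier (SnT n)" and y: "y \<in> carrier (SnT n)"
  obtain s l t m where xy: "x = (s, l)" "y = (t, m)" by (cases x, cases y)
  with y have t: "t permutes {1..n}" by (simp add: SnT_carrier)
  have "(\<Prod>i\<in>{1..n}. l (t i) * m i) = (\<Prod>i\<in>{1..n}. l (t i)) * (\<Prod>i\<in>{1..n}. m i)"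
    by (rule prod.distrib)
  also have "(\<Prod>i\<in>{1..n}. l (t i)) = (\<Prod>i\<in>{1..n}. l i)"
    using prod.permute[OF t, of l] by (simp add: o_def)
  finally show "(\<Prod>i\<in>{1..n}. snd (x \<otimes>\<^bsub>SnT n\<^esub> y) i) = (\<Prod>i\<in>{1..n}. snd x i) \<otimes>\<^bsub>Kmul\<^esub> (\<Prod>i\<in>{1..n}. snd y i)"
    by (simp add: xy SnT_mult Kmul_def)
qed

lemma prod_trunc:
  fixes l :: "nat \<Rightarrow> 'k::field"
  assumes "k \<le> n" "\<forall>i>k. l i = 1"
  shows "(\<Prod>i\<in>{1..n}. l i) = (\<Prod>i\<in>{1..k}. l i)"
  using assms by (intro prod.mono_neutral_right) auto

lemma torus_part:
  fixes n k :: nat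
  shows "1 \<le> k \<Longrightarrow> k \<le> n \<Longrightarrow> \<forall>l \<in> torus n. (\<forall>i>k. l i = 1) \<and> (\<Prod>i\<in>{1..n}. l i) = 1 \<longrightarrow>
     (id, l) \<in> derived (SnT n :: ((nat \<Rightarrow> nat) \<times> (nat \<Rightarrow> 'k::field)) monoid) (carrier (SnT n))"
proof (induction k)
  case 0 then show ?case by simp
next
  case (Suc k)
  show ?case
  proof (cases "k = 0")
  case True
  show ?thesis
  proof (intro ballI impI)
    fix l :: "nat \<Rightarrow> 'k" assume l: "l \<in> torus n" and h0: "(\<forall>i>Suc k. l i = 1) \<and> (\<Prod>i\<in>{1..n}. l i) = 1"
    have h: "(\<forall>i>1. l i = 1) \<and> (\<Prod>i\<in>{1..n}. l i) = 1" using h0 True by simp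
    have "(\<Prod>i\<in>{1..n}. l i) = l 1" using prod_trunc[of 1 n l] h Suc.prems True by simp
    have "l i = 1" for i
    proof -
      consider "i = 0" | "i = 1" | "i > 1" by linarith
      then show ?thesis
        using h l \<open>(\<Prod>i\<in>{1..n}. l i) = l 1\<close> by cases (auto simp: torus_def)
    qed
    then have "l = (\<lambda>_. 1)" by auto
    then show "(id, l) \<in> derived (SnT n) (carrier (SnT n))"
      by (simp add: derived_def generate.one[where G="SnT n", simplified SnT_one])
  qed
next
  case False
  then have hyps: "1 \<le> k" "k < n" using Suc.prems by auto
  show ?thesis
  proof (intro ballI impI)
    fix l :: "nat \<Rightarrow> 'k" assume l: "l \<in> torus n" and h: "(\<forall>i>Suc k. l i = 1) \<and> (\<Prod>i\<in>{1..n}. l i) = 1"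
    let ?G = "SnT n :: ((nat \<Rightarrow> nat) \<times> (nat \<Rightarrow> 'k)) monoid"
    interpret G: group ?G by (rule SnT_group)
    define a where "a = l (Suc k)"
    have a0: "a \<noteq> 0" using torus_nz[OF l] by (simp add: a_def)
    define l' where "l' = (\<lambda>i. if i = k then l k * a else if i = Suc k then 1 else l i)"
    define c where "c = (\<lambda>i. if i = k then inverse a else if i = Suc k then a else (1::'k))"
    have lsplit: "(id, l) = (id, l') \<otimes>\<^bsub>?G\<^esub> (id, c)"
      using a0 by (auto simp: SnT_mult l'_def c_def a_def)
    have l'T: "l' \<in> torus n"
      using l hyps a0 torus_nz[OF l] unfolding torus_def l'_def by (auto simp: a_def)
    have "(\<Prod>i\<in>{1..n}. l i) = (\<Prod>i\<in>{1..n}. l' i * c i)"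
      using a0 by (intro prod.cong) (auto simp: l'_def c_def a_def)
    also have "\<dots> = (\<Prod>i\<in>{1..n}. l' i) * (\<Prod>i\<in>{1..n}. c i)" by (rule prod.distrib)
    also have "(\<Prod>i\<in>{1..n}. c i) = (\<Prod>i\<in>{k, Suc k}. c i)"
      using hyps by (intro prod.mono_neutral_right) (auto simp: c_def)
    also have "\<dots> = 1" using a0 by (simp add: c_def)
    finally have pl': "(\<Prod>i\<in>{1..n}. l' i) = 1" using h by simp
    have l'D: "(id, l') \<in> derived ?G (carrier ?G)"
    proof -
      have "\<forall>i>k. l' i = 1" using h by (auto simp: l'_def)
      then show ?thesis using Suc.IH[OF hyps(1) less_imp_le[OF hyps(2)]] l'T pl' by blast
    qed
    define l0 where "l0 = (\<lambda>i. if i = k then inverse a else (1::'k))"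
    define t where "t = Transposition.transpose k (Suc k)"
    have tp: "t permutes {1..n}" unfolding t_def using hyps by (intro permutes_swap_id) auto
    have tt: "t \<circ> t = id" by (simp add: t_def)
    have l0T: "l0 \<in> torus n" using a0 hyps by (auto simp: torus_def l0_def)
    have x1: "(id, l0) \<in> carrier ?G" using l0T by (simp add: SnT_carrier)
    have x2: "(t, \<lambda>_. 1) \<in> carrier ?G" using tp by (simp add: SnT_carrier torus_def)
    have i1: "inv\<^bsub>?G\<^esub> (id, l0) = (id, \<lambda>i. inverse (l0 i))"
    proof (rule G.inv_equality)
      show "(id, \<lambda>i. inverse (l0 i)) \<otimes>\<^bsub>?G\<^esub> (id, l0) = \<one>\<^bsub>?G\<^esub>"
        using a0 by (auto simp: SnT_mult SnT_one l0_def)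
      show "(id, \<lambda>i. inverse (l0 i)) \<in> carrier ?G"
        using l0T by (auto simp: SnT_carrier torus_def l0_def)
    qed (rule x1)
    have i2: "inv\<^bsub>?G\<^esub> (t, \<lambda>_. 1) = (t, \<lambda>_. 1)"
      by (rule G.inv_equality) (auto simp: SnT_mult SnT_one tt x2)
    have "(id, l0) \<otimes>\<^bsub>?G\<^esub> (t, \<lambda>_. 1) \<otimes>\<^bsub>?G\<^esub> inv\<^bsub>?G\<^esub> (id, l0) \<otimes>\<^bsub>?G\<^esub> inv\<^bsub>?G\<^esub> (t, \<lambda>_. 1)
        = (t \<circ> t, \<lambda>i. l0 (t (t i)) * inverse (l0 (t i)))"
      by (simp add: i1 i2 SnT_mult)
    also have "\<dots> = (id, c)"
      using a0 by (auto simp: tt c_def l0_def t_def Transposition.transpose_def)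
    finally have "(id, c) \<in> derived_set ?G (carrier ?G)" using x1 x2 by blast
    then have cD: "(id, c) \<in> derived ?G (carrier ?G)" unfolding derived_def by (rule generate.incl)
    have "subgroup (derived ?G (carrier ?G)) ?G" by (rule G.derived_is_subgroup) simp
    then show "(id, l) \<in> derived ?G (carrier ?G)"
      using l'D cD lsplit by (metis subgroup.m_closed)
  qed
  qed
qed

theorem lemma5p3:
  fixes n :: nat
  assumes "n \<ge> 2"
  shows "derived (SnT n :: ((nat \<Rightarrow> nat) \<times> (nat \<Rightarrow> 'k::field_char_0)) monoid) (carrier (SnT n))
         = {(s, l). s \<in> derived (sym_group n) (carrier (sym_group n)) \<and> l \<in> (torus1 n :: (nat \<Rightarrow> 'k) set)}"
proof -
  let ?G = "SnT n :: ((nat \<Rightarrow> nat) \<times> (nat \<Rightarrow> 'k)) monoid"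
  let ?D = "derived ?G (carrier ?G)"
  let ?phi = "\<lambda>x::(nat \<Rightarrow> nat) \<times> (nat \<Rightarrow> 'k). \<Prod>i\<in>{1..n}. snd x i"
  interpret G: group ?G by (rule SnT_group)
  interpret F: group_hom ?G "sym_group n" fst by (rule fst_hom)
  interpret P: group_hom ?G "Kmul :: 'k monoid" ?phi by (rule phi_hom)
  interpret I: group_hom "sym_group n" ?G "\<lambda>s. (s, \<lambda>_. 1)" by (rule iota_hom)
  have fc: "fst ` carrier ?G = carrier (sym_group n)"
  proof
    show "fst ` carrier ?G \<subseteq> carrier (sym_group n)" by (auto simp: SnT_carrier sym_group_carrier)
    show "carrier (sym_group n) \<subseteq> fst ` carrier ?G"
    proof
      fix s assume "s \<in> carrier (sym_group n)"
      then have "(s, \<lambda>_. 1::'k) \<in> carrier ?G" using I.hom_closed by blast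
      then show "s \<in> fst ` carrier ?G" by force
    qed
  qed
  have fD: "fst ` ?D = derived (sym_group n) (carrier (sym_group n))"
    using F.derived_img[of "carrier ?G"] fc by simp
  have pD: "?phi ` ?D = {1}"
  proof -
    have "?phi ` ?D = derived Kmul (?phi ` carrier ?G)"
      using P.derived_img[of "carrier ?G"] by simp
    also have "\<dots> = {\<one>\<^bsub>Kmul\<^esub>}"
      by (rule comm_group.derived_eq_singleton[OF Kmul_comm]) (use P.hom_closed in auto)
    finally show ?thesis by (simp add: Kmul_def)
  qed
  show ?thesis
  proof
    show "?D \<subseteq> {(s, l). s \<in> derived (sym_group n) (carrier (sym_group n)) \<and> l \<in> torus1 n}"
    proof
      fix x assume x: "x \<in> ?D"
      then have "x \<in> carrier ?G" using G.derived_in_carrier by blast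
      moreover have "fst x \<in> derived (sym_group n) (carrier (sym_group n))" using x fD by blast
      moreover have "?phi x = 1" using x pD by blast
      ultimately show "x \<in> {(s, l). s \<in> derived (sym_group n) (carrier (sym_group n)) \<and> l \<in> torus1 n}"
        by (cases x) (auto simp: SnT_carrier torus1_def)
    qed
  next
    show "{(s, l). s \<in> derived (sym_group n) (carrier (sym_group n)) \<and> l \<in> torus1 n} \<subseteq> ?D"
    proof clarify
      fix s and l :: "nat \<Rightarrow> 'k"
      assume s: "s \<in> derived (sym_group n) (carrier (sym_group n))" and l: "l \<in> torus1 n"
      have "(s, \<lambda>_. 1::'k) \<in> (\<lambda>s. (s, \<lambda>_. 1)) ` derived (sym_group n) (carrier (sym_group n))"
        using s by blast
      also have "\<dots> = derived ?G ((\<lambda>s. (s, \<lambda>_. 1)) ` carrier (sym_group n))"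
        using I.derived_img[of "carrier (sym_group n)"] by simp
      also have "\<dots> \<subseteq> ?D"
        by (rule G.mono_derived) (use I.hom_closed in auto)
      finally have s1: "(s, \<lambda>_. 1::'k) \<in> ?D" .
      have l1: "(id, l) \<in> ?D"
        using torus_part[of n n] assms l by (auto simp: torus1_def torus_def)
      have "subgroup ?D ?G" by (rule G.derived_is_subgroup) simp
      then have "(s, \<lambda>_. 1::'k) \<otimes>\<^bsub>?G\<^esub> (id, l) \<in> ?D"
        using s1 l1 by (rule subgroup.m_closed)
      then show "(s, l) \<in> ?D" by (simp add: SnT_mult)
    qed
  qed
qed

end
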